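(* Let $S$ be a numerical semigroup, let $u\in\mathrm U(\mathrm{Betti}(S))$ and $\Lambda=\{b\in\mathrm{Betti}(S): b\le_S u\}$. Then for every $s\in S$ and every $z\in\mathrm B(s;\Lambda)$ there exist $w\in\mathrm I_s(S)$ and $x_1,\dots,x_t\in\mathrm I(\Lambda)$ with $z=w+x_1+\cdots+x_t$, and $w$ together with the multiset $\{x_1,\dots,x_t\}$ is uniquely determined by $z$. Moreover, for every $s\in S$, $$|\mathrm B(s;\Lambda)|=\sum_{j=0}^{q_s}|\mathrm B(s-ju;\Lambda\setminus\{u\})|\binom{\mathrm i(u)+j-1}{j},$$ where $q_s$ is the largest integer with $q_su\le_S s$.
   Context: A numerical semigroup $S$ is a submonoid of $(\mathbb N,+)$ with finite complement, minimally generated by $\{n_1,\dots,n_e\}$. Write $a\le_S b$ if $b-a\in S$. Let $\varphi:\mathbb N^e\to S$, $\varphi(a)=\sum_ia_in_i$; $\mathrm Z(s)=\varphi^{-1}(s)$. $\nabla_s$ is the graph on $\mathrm Z(s)$ with distinct $x,y$ adjacent iff $x\cdot y\ne0$; $s$ is a Betti element if $\nabla_s$ is disconnected; $\mathrm{Betti}(S)$ is the set of Betti elements. For a poset $(X,\le)$, $\mathrm U(X)=\{x\in X: \{y\in X:y\le x\}\text{ is totally ordered}\}$; here $X=(\mathrm{Betti}(S),\le_S)$. A factorization $z\in\mathrm Z(s)$ is isolated if $z\cdot x=0$ for all $x\in\mathrm Z(s)\setminus\{z\}$; $\mathrm I(t)$ is the set of isolated factorizations of $t$, $\mathrm i(t)=|\mathrm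 I(t)|$, and $\mathrm I(\Lambda)=\bigcup_{t\in\Lambda}\mathrm I(t)$. $\mathrm I_s(S)$ is the set of $z\in\mathbb N^e$ such that $\varphi(z)$ has exactly one factorization. For $\Lambda\subseteq S$ and $s\in S$, $\mathrm B(s;\Lambda)=\{w+x_1+\cdots+x_l\in\mathrm Z(s): w\in\mathrm I_s(S),\ l\ge0,\ x_1,\dots,x_l\in\mathrm I(\Lambda)\}$ (with $\mathrm I(\emptyset)=\emptyset$). *)

theory Defs
  imports Main "HOL-Library.Multiset"
begin

text \<open>Numerical semigroups. A factorization (element of N^e) is represented as a
function z :: nat => nat indexed by the minimal generators themselves, vanishing
outside the minimal generating set.\<close>

definition numerical_semigroup :: "nat set \<Rightarrow> bool" where
  "numerical_semigroup S \<longleftrightarrow> 0 \<in> S \<and> (\<forall>a\<in>S. \<forall>b\<in>S. a + b \<in> S) \<and> finite (UNIV - S)"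

definition mingens :: "nat set \<Rightarrow> nat set" where
  "mingens S = {g \<in> S. g \<noteq> 0 \<and>
     \<not> (\<exists>a\<in>S. \<exists>b\<in>S. a \<noteq> 0 \<and> b \<noteq> 0 \<and> g = a + b)}"

definition vecs :: "nat set \<Rightarrow> (nat \<Rightarrow> nat) set" where
  "vecs S = {z. \<forall>g. g \<notin> mingens S \<longrightarrow> z g = 0}"

definition phi :: "nat set \<Rightarrow> (nat \<Rightarrow> nat) \<Rightarrow> nat" where
  "phi S z = (\<Sum>g\<in>mingens S. z g * g)"

definition Z :: "nat set \<Rightarrow> nat \<Rightarrow> (nat \<Rightarrow> nat) set" where
  "Z S s = {z \<in> vecs S. phi S z = s}"

definition dot :: "nat set \<Rightarrow> (nat \<Rightarrow> nat) \<Rightarrow> (nat \<Rightarrow> nat) \<Rightarrow> nat" where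
  "dot S x y = (\<Sum>g\<in>mingens S. x g * y g)"

definition nabla_edges :: "nat set \<Rightarrow> nat \<Rightarrow> ((nat \<Rightarrow> nat) \<times> (nat \<Rightarrow> nat)) set" where
  "nabla_edges S s = {(x, y). x \<in> Z S s \<and> y \<in> Z S s \<and> x \<noteq> y \<and> dot S x y \<noteq> 0}"

definition nabla_connected :: "nat set \<Rightarrow> nat \<Rightarrow> bool" where
  "nabla_connected S s \<longleftrightarrow> (\<forall>x\<in>Z S s. \<forall>y\<in>Z S s. (x, y) \<in> (nabla_edges S s)\<^sup>*)"

definition Betti :: "nat set \<Rightarrow> nat set" where
  "Betti S = {s \<in> S. \<not> nabla_connected S s}"

definition leS :: "nat set \<Rightarrow> nat \<Rightarrow> nat \<Rightarrow> bool" where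
  "leS S a b \<longleftrightarrow> a \<le> b \<and> b - a \<in> S"

definition U_Betti :: "nat set \<Rightarrow> nat set" where
  "U_Betti S = {x \<in> Betti S. \<forall>y\<in>Betti S. \<forall>y'\<in>Betti S.
      leS S y x \<longrightarrow> leS S y' x \<longrightarrow> leS S y y' \<or> leS S y' y}"

definition isolated :: "nat set \<Rightarrow> nat \<Rightarrow> (nat \<Rightarrow> nat) \<Rightarrow> bool" where
  "isolated S t z \<longleftrightarrow> z \<in> Z S t \<and> (\<forall>x \<in> Z S t - {z}. dot S z x = 0)"

definition Iso :: "nat set \<Rightarrow> nat \<Rightarrow> (nat \<Rightarrow> nat) set" where
  "Iso S t = {z. isolated S t z}"

definition iso_count :: "nat set \<Rightarrow> nat \<Rightarrow> nat" where
  "iso_count S t = card (Iso S t)"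

definition Iso_set :: "nat set \<Rightarrow> nat set \<Rightarrow> (nat \<Rightarrow> nat) set" where
  "Iso_set S \<Lambda> = (\<Union>t\<in>\<Lambda>. Iso S t)"

definition Is :: "nat set \<Rightarrow> (nat \<Rightarrow> nat) set" where
  "Is S = {z \<in> vecs S. card (Z S (phi S z)) = 1}"

definition vsum :: "(nat \<Rightarrow> nat) \<Rightarrow> (nat \<Rightarrow> nat) list \<Rightarrow> nat \<Rightarrow> nat" where
  "vsum w xs = (\<lambda>g. w g + (\<Sum>x\<leftarrow>xs. x g))"

definition B :: "nat set \<Rightarrow> nat \<Rightarrow> nat set \<Rightarrow> (nat \<Rightarrow> nat) set" where
  "B S s \<Lambda> = {z \<in> Z S s. \<exists>w\<in>Is S. \<exists>xs. set xs \<subseteq> Iso_set S \<Lambda> \<and> z = vsum w xs}"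

definition qmax :: "nat set \<Rightarrow> nat \<Rightarrow> nat \<Rightarrow> nat" where
  "qmax S u s = (GREATEST q. leS S (q * u) s)"

end

theory Submission
  imports Defs
begin

lemma ns_bound:
  assumes "numerical_semigroup S"
  shows "\<exists>F. \<forall>n>F. n \<in> S"
proof -
  have "finite (UNIV - S)" using assms unfolding numerical_semigroup_def by blast
  then obtain m where "\<forall>n\<in>UNIV - S. n < m" using finite_nat_set_iff_bounded by blast
  then show ?thesis by (metis DiffI UNIV_I less_asym)
qed

lemma ns_zero: "numerical_semigroup S \<Longrightarrow> 0 \<in> S"
  unfolding numerical_semigroup_def by blast

lemma ns_add: "numerical_semigroup S \<Longrightarrow> a \<in> S \<Longrightarrow> b \<in> S \<Longrightarrow> a + b \<in> S"
  unfolding numerical_semigroup_def by blast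

lemma mingens_S: "g \<in> mingens S \<Longrightarrow> g \<in> S"
  unfolding mingens_def by blast

lemma mingens_pos: "g \<in> mingens S \<Longrightarrow> 0 < g"
  unfolding mingens_def by blast

lemma finite_mingens:
  assumes "numerical_semigroup S"
  shows "finite (mingens S)"
proof -
  obtain F where F: "\<forall>n>F. n \<in> S" using ns_bound[OF assms] by blast
  have "mingens S \<subseteq> {..F + (F+1)}"
  proof
    fix g assume g: "g \<in> mingens S"
    show "g \<in> {..F + (F+1)}"
    proof (rule ccontr)
      assume "g \<notin> {..F + (F+1)}"
      hence gt: "g > F + (F+1)" by simp
      have a: "g - (F+1) \<in> S" using F gt by simp
      have b: "F + 1 \<in> S" using F by simp
      have c: "g - (F+1) \<noteq> 0" using gt by simp
      have d: "g = (g - (F+1)) + (F+1)" using gt by simp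
      have "\<not> (\<exists>a\<in>S. \<exists>b\<in>S. a \<noteq> 0 \<and> b \<noteq> 0 \<and> g = a + b)" using g unfolding mingens_def by simp
      thus False using a b c d by (metis add_eq_0_iff_both_eq_0 one_neq_zero)
    qed
  qed
  thus ?thesis using finite_subset by blast
qed

lemma mult_in_S: "numerical_semigroup S \<Longrightarrow> g \<in> S \<Longrightarrow> k * g \<in> S"
  by (induction k) (auto simp: ns_zero ns_add)

lemma sum_in_S:
  assumes "numerical_semigroup S" "finite A" "\<forall>g\<in>A. f g \<in> S"
  shows "sum f A \<in> S"
  using assms(2,3) by (induction A rule: finite_induct) (auto simp: ns_zero[OF assms(1)] ns_add[OF assms(1)])

lemma phi_in_S: "numerical_semigroup S \<Longrightarrow> phi S z \<in> S"
  unfolding phi_def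
  by (rule sum_in_S) (auto simp: finite_mingens mult_in_S mingens_S)

lemma phi_add: "phi S (\<lambda>g. x g + y g) = phi S x + phi S y"
  unfolding phi_def by (simp add: sum.distrib add_mult_distrib)

lemma vecs_add: "x \<in> vecs S \<Longrightarrow> y \<in> vecs S \<Longrightarrow> (\<lambda>g. x g + y g) \<in> vecs S"
  unfolding vecs_def by auto

lemma vecs_diff: "x \<in> vecs S \<Longrightarrow> (\<lambda>g. x g - y g) \<in> vecs S"
  unfolding vecs_def by auto

lemma phi_diff:
  assumes "\<forall>g. y g \<le> x g"
  shows "phi S (\<lambda>g. x g - y g) = phi S x - phi S y"
proof -
  have "phi S x = phi S (\<lambda>g. (x g - y g) + y g)" using assms by (simp add: le_add_diff_inverse2)
  also have "\<dots> = phi S (\<lambda>g. x g - y g) + phi S y" by (rule phi_add)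
  finally show ?thesis by simp
qed

lemma fact_exists:
  assumes NS: "numerical_semigroup S" and "s \<in> S"
  shows "\<exists>z\<in>vecs S. phi S z = s"
  using assms(2)
proof (induction s rule: less_induct)
  case (less s)
  show ?case
  proof (cases "s = 0")
    case True
    show ?thesis by (rule bexI[of _ "\<lambda>_. 0"]) (auto simp: phi_def vecs_def True)
  next
    case False
    show ?thesis
    proof (cases "s \<in> mingens S")
      case True
      have "phi S (\<lambda>g. if g = s then 1 else 0) = (\<Sum>g\<in>mingens S. if g = s then s else 0)"
        unfolding phi_def by (intro sum.cong) auto
      also have "\<dots> = s" using True finite_mingens[OF NS] by simp
      finally have "phi S (\<lambda>g. if g = s then 1 else 0) = s" .
      moreover have "(\<lambda>g. if g = s then 1 else 0) \<in> vecs S" using True unfolding vecs_def by auto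
      ultimately show ?thesis by blast
    next
      case nm: False
      then obtain a b where ab: "a \<in> S" "b \<in> S" "a \<noteq> 0" "b \<noteq> 0" "s = a + b"
        using less.prems False unfolding mingens_def by blast
      have "a < s" "b < s" using ab by auto
      then obtain za zb where "za \<in> vecs S" "phi S za = a" "zb \<in> vecs S" "phi S zb = b"
        using less.IH[of a] less.IH[of b] ab(1,2) by blast
      thus ?thesis using ab by (intro bexI[of _ "\<lambda>g. za g + zb g"]) (auto simp: phi_add vecs_add)
    qed
  qed
qed

lemma finite_Z:
  assumes NS: "numerical_semigroup S"
  shows "finite (Z S s)"
proof -
  have "Z S s \<subseteq> {f. \<forall>x. (x \<in> mingens S \<longrightarrow> f x \<in> {0..s}) \<and> (x \<notin> mingens S \<longrightarrow> f x = 0)}"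
  proof
    fix z assume z: "z \<in> Z S s"
    have "z g \<le> s" if g: "g \<in> mingens S" for g
    proof -
      have "z g * g \<le> phi S z" unfolding phi_def
        by (rule member_le_sum) (use g finite_mingens[OF NS] in auto)
      moreover have "z g \<le> z g * g" using mingens_pos[OF g] by simp
      ultimately have "z g \<le> phi S z" using le_trans by blast
      thus ?thesis using z unfolding Z_def by auto
    qed
    thus "z \<in> {f. \<forall>x. (x \<in> mingens S \<longrightarrow> f x \<in> {0..s}) \<and> (x \<notin> mingens S \<longrightarrow> f x = 0)}"
      using z unfolding Z_def vecs_def by auto
  qed
  thus ?thesis by (rule finite_subset) (rule finite_set_of_finite_funs[OF finite_mingens[OF NS]], simp)
qed

lemma Z_zero:
  assumes NS: "numerical_semigroup S" and z: "z \<in> Z S 0"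
  shows "z = (\<lambda>_. 0)"
proof
  fix g
  show "z g = 0"
  proof (cases "g \<in> mingens S")
    case True
    have "z g * g \<le> phi S z" unfolding phi_def
      by (rule member_le_sum) (use True finite_mingens[OF NS] in auto)
    thus ?thesis using z mingens_pos[OF True] unfolding Z_def by auto
  next
    case False thus ?thesis using z unfolding Z_def vecs_def by auto
  qed
qed

lemma Betti_two:
  assumes "t \<in> Betti S"
  shows "\<exists>a\<in>Z S t. \<exists>b\<in>Z S t. a \<noteq> b"
proof (rule ccontr)
  assume "\<not> ?thesis"
  hence "nabla_connected S t" unfolding nabla_connected_def by auto
  thus False using assms unfolding Betti_def by auto
qed

lemma Betti_nonzero:
  assumes NS: "numerical_semigroup S" and "t \<in> Betti S"
  shows "t \<noteq> 0"
proof
  assume t0: "t = 0"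
  obtain a b where "a \<in> Z S t" "b \<in> Z S t" "a \<noteq> b" using Betti_two[OF assms(2)] by blast
  thus False using Z_zero[OF NS, of a] Z_zero[OF NS, of b] t0 by simp
qed

lemma dot_pos:
  assumes NS: "numerical_semigroup S" and "g \<in> mingens S" "x g > 0" "y g > 0"
  shows "dot S x y \<noteq> 0"
proof -
  have "x g * y g \<le> dot S x y" unfolding dot_def
    by (rule member_le_sum) (use assms finite_mingens[OF NS] in auto)
  moreover have "0 < x g * y g" using assms by simp
  ultimately show ?thesis by linarith
qed

lemma Is_Z: "w \<in> Is S \<Longrightarrow> Z S (phi S w) = {w}"
proof -
  assume w: "w \<in> Is S"
  hence "card (Z S (phi S w)) = 1" "w \<in> Z S (phi S w)" unfolding Is_def Z_def by auto
  then obtain a where "Z S (phi S w) = {a}" using card_1_singletonE by blast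
  thus ?thesis using \<open>w \<in> Z S (phi S w)\<close> by simp
qed

lemma Is_down:
  assumes w: "w \<in> Is S" and y: "y \<in> vecs S" and le: "\<forall>g. y g \<le> w g"
    and y': "y' \<in> Z S (phi S y)"
  shows "y' = y"
proof -
  define v where "v = (\<lambda>g. (w g - y g) + y' g)"
  have wv: "w \<in> vecs S" using w unfolding Is_def by auto
  have "v \<in> vecs S" unfolding v_def using wv y' unfolding Z_def by (auto intro: vecs_add vecs_diff)
  moreover have "phi S v = phi S w"
  proof -
    have "phi S v = phi S (\<lambda>g. w g - y g) + phi S y'" unfolding v_def by (rule phi_add)
    also have "\<dots> = (phi S w - phi S y) + phi S y" using phi_diff[OF le] y' unfolding Z_def by simp
    also have "phi S y \<le> phi S w"
    proof -
      have "phi S w = phi S (\<lambda>g. (w g - y g) + y g)" using le by (simp add: le_add_diff_inverse2)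
      also have "\<dots> = phi S (\<lambda>g. w g - y g) + phi S y" by (rule phi_add)
      finally show ?thesis by simp
    qed
    hence "(phi S w - phi S y) + phi S y = phi S w" by simp
    finally show ?thesis .
  qed
  ultimately have "v \<in> Z S (phi S w)" unfolding Z_def by simp
  hence "v = w" using Is_Z[OF w] by simp
  have "\<forall>g. y' g = y g"
  proof
    fix g
    have "(w g - y g) + y' g = w g" using fun_cong[OF \<open>v = w\<close>, of g] unfolding v_def .
    thus "y' g = y g" using le[rule_format, of g] by arith
  qed
  thus ?thesis by auto
qed

lemma Is_not_Betti:
  assumes w: "w \<in> Is S" and y: "y \<in> vecs S" and le: "\<forall>g. y g \<le> w g"
  shows "phi S y \<notin> Betti S"
proof
  assume "phi S y \<in> Betti S"
  then obtain a b where "a \<in> Z S (phi S y)" "b \<in> Z S (phi S y)" "a \<noteq> b" using Betti_two by blast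
  moreover have "a = y" "b = y" using Is_down[OF w y le] calculation by auto
  ultimately show False by simp
qed

lemma Iso_Z: "x \<in> Iso S t \<Longrightarrow> x \<in> Z S t"
  unfolding Iso_def isolated_def by auto

lemma Iso_eq:
  assumes NS: "numerical_semigroup S" and y: "y \<in> Iso S t" and v: "v \<in> Z S t"
    and g: "g \<in> mingens S" "y g > 0" "v g > 0"
  shows "v = y"
proof (rule ccontr)
  assume "v \<noteq> y"
  hence "dot S y v = 0" using y v unfolding Iso_def isolated_def by auto
  thus False using dot_pos[OF NS g(1), of y v, OF g(2) g(3)] by simp
qed

lemma Iso_sub:
  assumes NS: "numerical_semigroup S" and y: "y \<in> Iso S t'" and x: "x \<in> vecs S"
    and le: "\<forall>g. x g \<le> y g" and ne: "x \<noteq> y" and x': "x' \<in> Z S (phi S x)"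
  shows "x' = x"
proof -
  define v where "v = (\<lambda>g. (y g - x g) + x' g)"
  have yZ: "y \<in> Z S t'" using Iso_Z[OF y] .
  have "v \<in> vecs S" unfolding v_def using yZ x' unfolding Z_def by (auto intro: vecs_add vecs_diff)
  moreover have "phi S v = t'"
  proof -
    have "phi S v = phi S (\<lambda>g. y g - x g) + phi S x'" unfolding v_def by (rule phi_add)
    also have "\<dots> = (phi S y - phi S x) + phi S x" using phi_diff[OF le] x' unfolding Z_def by simp
    also have "phi S x \<le> phi S y"
    proof -
      have "phi S y = phi S (\<lambda>g. (y g - x g) + x g)" using le by (simp add: le_add_diff_inverse2)
      also have "\<dots> = phi S (\<lambda>g. y g - x g) + phi S x" by (rule phi_add)
      finally show ?thesis by simp
    qed
    hence "(phi S y - phi S x) + phi S x = phi S y" by simp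
    finally show ?thesis using yZ unfolding Z_def by simp
  qed
  ultimately have vZ: "v \<in> Z S t'" unfolding Z_def by simp
  obtain g0 where g0: "x g0 \<noteq> y g0" using ne by blast
  hence lt: "x g0 < y g0" using le le_neq_implies_less by blast
  have g0m: "g0 \<in> mingens S"
  proof (rule ccontr)
    assume "g0 \<notin> mingens S"
    hence "y g0 = 0" using yZ unfolding Z_def vecs_def by auto
    thus False using lt by simp
  qed
  have "v g0 > 0" unfolding v_def using lt by simp
  hence "v = y" using Iso_eq[OF NS y vZ g0m] lt by simp
  have "\<forall>g. x' g = x g"
  proof
    fix g
    have "(y g - x g) + x' g = y g" using fun_cong[OF \<open>v = y\<close>, of g] unfolding v_def .
    thus "x' g = x g" using le[rule_format, of g] by arith
  qed
  thus ?thesis by auto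
qed

lemma Iso_overlap:
  assumes NS: "numerical_semigroup S" and x: "x \<in> Iso S t" and y: "y \<in> Iso S t'"
    and le: "leS S t t'" and ne: "t \<noteq> t'" and tB: "t \<in> Betti S"
    and g: "g \<in> mingens S" "x g > 0" "y g > 0"
  shows False
proof -
  have xZ: "x \<in> Z S t" using Iso_Z[OF x] .
  have yZ: "y \<in> Z S t'" using Iso_Z[OF y] .
  have "t' - t \<in> S" "t \<le> t'" using le unfolding leS_def by auto
  then obtain v where v: "v \<in> vecs S" "phi S v = t' - t" using fact_exists[OF NS] by blast
  define y2 where "y2 = (\<lambda>h. x h + v h)"
  have "y2 \<in> Z S t'" unfolding y2_def Z_def using xZ v \<open>t \<le> t'\<close>
    by (auto simp: phi_add intro!: vecs_add simp: Z_def)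
  moreover have "y2 g > 0" unfolding y2_def using g by simp
  ultimately have "y2 = y" using Iso_eq[OF NS y _ g(1) g(3)] by simp
  have le2: "\<forall>h. x h \<le> y h"
  proof
    fix h
    have "x h + v h = y h" using fun_cong[OF \<open>y2 = y\<close>, of h] unfolding y2_def .
    thus "x h \<le> y h" by arith
  qed
  have "x \<noteq> y" using xZ yZ ne unfolding Z_def by auto
  have xv: "x \<in> vecs S" "phi S x = t" using xZ unfolding Z_def by auto
  have "\<forall>x'\<in>Z S t. x' = x"
  proof
    fix x' assume "x' \<in> Z S t"
    hence "x' \<in> Z S (phi S x)" using xv by simp
    thus "x' = x" by (rule Iso_sub[OF NS y xv(1) le2 \<open>x \<noteq> y\<close>])
  qed
  moreover obtain a b where ab: "a \<in> Z S t" "b \<in> Z S t" "a \<noteq> b" using Betti_two[OF tB] by blast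
  ultimately have "a = x" "b = x" by (meson bspec)+
  thus False using ab(3) by simp
qed

definition chain :: "nat set \<Rightarrow> nat set \<Rightarrow> bool" where
  "chain S L \<longleftrightarrow> L \<subseteq> Betti S \<and> (\<forall>a\<in>L. \<forall>b\<in>L. leS S a b \<or> leS S b a)"

lemma Iso_disjoint:
  assumes NS: "numerical_semigroup S" and ch: "chain S L"
    and x: "x \<in> Iso_set S L" and y: "y \<in> Iso_set S L" and ne: "x \<noteq> y"
  shows "x g = 0 \<or> y g = 0"
proof (rule ccontr)
  assume "\<not> ?thesis"
  hence pos: "x g > 0" "y g > 0" by auto
  obtain t t' where t: "t \<in> L" "x \<in> Iso S t" and t': "t' \<in> L" "y \<in> Iso S t'"
    using x y unfolding Iso_set_def by blast
  have gm: "g \<in> mingens S"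
  proof (rule ccontr)
    assume "g \<notin> mingens S"
    thus False using Iso_Z[OF t(2)] pos unfolding Z_def vecs_def by auto
  qed
  show False
  proof (cases "t = t'")
    case True
    hence yZ: "y \<in> Z S t" using Iso_Z[OF t'(2)] by simp
    have "y = x" by (rule Iso_eq[OF NS t(2) yZ gm pos(1) pos(2)])
    thus False using ne by simp
  next
    case False
    have B: "t \<in> Betti S" "t' \<in> Betti S" using ch t t' unfolding chain_def by auto
    from ch t t' have "leS S t t' \<or> leS S t' t" unfolding chain_def by blast
    thus False
    proof
      assume "leS S t t'"
      thus False using Iso_overlap[OF NS t(2) t'(2) _ False B(1) gm pos] by simp
    next
      assume "leS S t' t"
      thus False using Iso_overlap[OF NS t'(2) t(2) _ _ B(2) gm pos(2) pos(1)] False by simp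
    qed
  qed
qed

lemma sum_list_count:
  assumes "\<forall>y\<in>set xs. y \<noteq> x \<longrightarrow> y g = 0"
  shows "(\<Sum>y\<leftarrow>xs. y g) = count (mset xs) x * x g"
  using assms by (induction xs) auto

lemma sum_list_mset:
  assumes "mset xs = mset ys"
  shows "(\<Sum>y\<leftarrow>xs. (f y :: nat)) = (\<Sum>y\<leftarrow>ys. f y)"
proof -
  have "(\<Sum>y\<leftarrow>xs. f y) = sum_mset (mset (map f xs))" by (rule sum_mset_sum_list[symmetric])
  also have "\<dots> = sum_mset (mset (map f ys))" using assms by simp
  also have "\<dots> = (\<Sum>y\<leftarrow>ys. f y)" by (rule sum_mset_sum_list)
  finally show ?thesis .
qed

lemma vsum_apply: "vsum w xs g = w g + (\<Sum>y\<leftarrow>xs. y g)"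
  unfolding vsum_def by simp

lemma Iso_set_vecs: "x \<in> Iso_set S L \<Longrightarrow> x \<in> vecs S"
  unfolding Iso_set_def Iso_def isolated_def Z_def by auto

lemma Iso_set_Betti: "chain S L \<Longrightarrow> x \<in> Iso_set S L \<Longrightarrow> phi S x \<in> Betti S"
  unfolding chain_def Iso_set_def Iso_def isolated_def Z_def by auto

lemma count_le:
  assumes NS: "numerical_semigroup S" and ch: "chain S L"
    and w: "w \<in> Is S" and w': "w' \<in> Is S"
    and xs: "set xs \<subseteq> Iso_set S L" and xs': "set xs' \<subseteq> Iso_set S L"
    and eq: "vsum w xs = vsum w' xs'" and x: "x \<in> Iso_set S L"
  shows "count (mset xs') x \<le> count (mset xs) x"
proof (rule ccontr)
  assume "\<not> ?thesis"
  hence lt: "count (mset xs) x < count (mset xs') x" by simp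
  have "\<forall>h. x h \<le> w h"
  proof
    fix h
    show "x h \<le> w h"
    proof (cases "x h = 0")
      case True thus ?thesis by simp
    next
      case False
      have "\<forall>y\<in>set xs. y \<noteq> x \<longrightarrow> y h = 0"
      proof (intro ballI impI)
        fix y assume "y \<in> set xs" "y \<noteq> x"
        hence "y \<in> Iso_set S L" using xs by auto
        from Iso_disjoint[OF NS ch this x \<open>y \<noteq> x\<close>, of h] False show "y h = 0" by simp
      qed
      hence e1: "(\<Sum>y\<leftarrow>xs. y h) = count (mset xs) x * x h" by (rule sum_list_count)
      have "\<forall>y\<in>set xs'. y \<noteq> x \<longrightarrow> y h = 0"
      proof (intro ballI impI)
        fix y assume "y \<in> set xs'" "y \<noteq> x"
        hence "y \<in> Iso_set S L" using xs' by auto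
        from Iso_disjoint[OF NS ch this x \<open>y \<noteq> x\<close>, of h] False show "y h = 0" by simp
      qed
      hence e2: "(\<Sum>y\<leftarrow>xs'. y h) = count (mset xs') x * x h" by (rule sum_list_count)
      have "w h + count (mset xs) x * x h = w' h + count (mset xs') x * x h"
      proof -
        have "vsum w xs h = vsum w' xs' h" using eq by simp
        thus ?thesis unfolding vsum_apply e1 e2 .
      qed
      moreover have "count (mset xs') x * x h \<ge> (count (mset xs) x + 1) * x h"
        using lt by (intro mult_right_mono) auto
      moreover have "(count (mset xs) x + 1) * x h = count (mset xs) x * x h + x h" by simp
      ultimately show ?thesis by linarith
    qed
  qed
  hence "phi S x \<notin> Betti S" by (rule Is_not_Betti[OF w Iso_set_vecs[OF x]])
  thus False using Iso_set_Betti[OF ch x] by simp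
qed

lemma uniqueness:
  assumes NS: "numerical_semigroup S" and ch: "chain S L"
    and w: "w \<in> Is S" and w': "w' \<in> Is S"
    and xs: "set xs \<subseteq> Iso_set S L" and xs': "set xs' \<subseteq> Iso_set S L"
    and eq: "vsum w xs = vsum w' xs'"
  shows "w = w' \<and> mset xs = mset xs'"
proof -
  have m: "mset xs = mset xs'"
  proof (rule multiset_eqI)
    fix x
    show "count (mset xs) x = count (mset xs') x"
    proof (cases "x \<in> Iso_set S L")
      case True
      show ?thesis using count_le[OF NS ch w w' xs xs' eq True]
          count_le[OF NS ch w' w xs' xs eq[symmetric] True] by simp
    next
      case False
      hence "x \<notin> set xs" "x \<notin> set xs'" using xs xs' by auto
      thus ?thesis by (metis count_mset_0_iff)
    qed
  qed
  have "w = w'"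
  proof
    fix g
    have "vsum w xs g = vsum w' xs' g" using eq by simp
    thus "w g = w' g" unfolding vsum_apply using sum_list_mset[OF m, of "\<lambda>y. y g"] by simp
  qed
  thus ?thesis using m by simp
qed

definition msum :: "(nat \<Rightarrow> nat) multiset \<Rightarrow> nat \<Rightarrow> nat" where
  "msum M = (\<lambda>g. \<Sum>x\<in>#M. x g)"

lemma msum_add_mset: "msum (add_mset x M) = (\<lambda>g. x g + msum M g)"
  unfolding msum_def by simp

lemma msum_empty: "msum {#} = (\<lambda>g. 0)"
  unfolding msum_def by simp

lemma msum_mset: "msum (mset xs) g = (\<Sum>y\<leftarrow>xs. y g)"
proof -
  have "msum (mset xs) g = sum_mset (mset (map (\<lambda>y. y g) xs))" unfolding msum_def by simp
  also have "\<dots> = (\<Sum>y\<leftarrow>xs. y g)" by (rule sum_mset_sum_list)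
  finally show ?thesis .
qed

lemma msum_Iso:
  assumes "set_mset M \<subseteq> Iso S u"
  shows "phi S (msum M) = size M * u \<and> msum M \<in> vecs S"
  using assms
proof (induction M)
  case empty
  show ?case by (simp add: msum_empty phi_def vecs_def)
next
  case (add x M)
  have x: "x \<in> Z S u" using add.prems Iso_Z by auto
  have IH: "phi S (msum M) = size M * u \<and> msum M \<in> vecs S" using add.IH add.prems by auto
  show ?case unfolding msum_add_mset
    using x IH by (auto simp: phi_add Z_def intro!: vecs_add)
qed

lemma vsum_vecs:
  assumes "w \<in> vecs S" "set xs \<subseteq> vecs S"
  shows "vsum w xs \<in> vecs S"
proof -
  have "(\<Sum>y\<leftarrow>xs. y g) = 0" if "g \<notin> mingens S" for g
    using assms(2) that by (induction xs) (auto simp: vecs_def)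
  thus ?thesis using assms(1) unfolding vecs_def vsum_apply by auto
qed

lemma qmax_iff:
  assumes NS: "numerical_semigroup S" and u: "u \<in> S" "u > 0" and s: "s \<in> S"
  shows "leS S (j * u) s \<longleftrightarrow> j \<le> qmax S u s"
proof -
  let ?P = "\<lambda>q. leS S (q * u) s"
  have P0: "?P 0" using s unfolding leS_def by simp
  have bnd: "\<And>y. ?P y \<Longrightarrow> y \<le> s"
  proof -
    fix y assume "?P y"
    hence "y * u \<le> s" unfolding leS_def by simp
    moreover have "y \<le> y * u" using u(2) by simp
    ultimately show "y \<le> s" by linarith
  qed
  have Pq: "?P (qmax S u s)" unfolding qmax_def by (rule GreatestI_nat[of ?P 0 s, OF P0 bnd])
  show ?thesis
  proof
    assume "?P j" thus "j \<le> qmax S u s" unfolding qmax_def by (rule Greatest_le_nat[of ?P j s, OF _ bnd])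
  next
    assume jq: "j \<le> qmax S u s"
    let ?q = "qmax S u s"
    have a: "?q * u \<le> s" "s - ?q * u \<in> S" using Pq unfolding leS_def by auto
    have "j * u \<le> ?q * u" using jq by simp
    moreover have "s - j * u = (s - ?q * u) + (?q - j) * u"
    proof -
      have "?q * u = j * u + (?q - j) * u" using jq by (simp add: add_mult_distrib[symmetric])
      thus ?thesis using a(1) by simp
    qed
    moreover have "(s - ?q * u) + (?q - j) * u \<in> S"
      using a(2) mult_in_S[OF NS u(1)] ns_add[OF NS] by blast
    ultimately have "s - j * u \<in> S" by simp
    moreover have "j * u \<le> s" using \<open>j * u \<le> ?q * u\<close> a(1) by linarith
    ultimately show "?P j" unfolding leS_def by simp
  qed
qed

lemma Iso_set_split:
  assumes "u \<in> L"
  shows "Iso_set S L = Iso_set S (L - {u}) \<union> Iso S u"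
  using assms unfolding Iso_set_def by auto

lemma Iso_set_not_u:
  assumes "x \<in> Iso_set S (L - {u})"
  shows "x \<notin> Iso S u"
proof
  assume "x \<in> Iso S u"
  hence "phi S x = u" using Iso_Z unfolding Z_def by blast
  moreover obtain t where "t \<in> L - {u}" "x \<in> Iso S t" using assms unfolding Iso_set_def by blast
  ultimately show False using Iso_Z unfolding Z_def by blast
qed

lemma chain_sub: "chain S L \<Longrightarrow> L' \<subseteq> L \<Longrightarrow> chain S L'"
  unfolding chain_def by blast

lemma vsum_append: "vsum w (rs @ ms) = (\<lambda>g. vsum w rs g + msum (mset ms) g)"
  unfolding vsum_def msum_mset by (simp add: add.assoc)

lemma count_formula:
  assumes NS: "numerical_semigroup S" and ch: "chain S L" and uL: "u \<in> L" and s: "s \<in> S"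
  shows "card (B S s L) = (\<Sum>j=0..qmax S u s. card (B S (s - j * u) (L - {u})) *
                ((iso_count S u + j - 1) choose j))"
proof -
  let ?L' = "L - {u}"
  let ?q = "qmax S u s"
  define MS where "MS j = multisets_of_size (Iso S u) j" for j
  define D where "D = (\<Union>j\<in>{0..?q}. B S (s - j * u) ?L' \<times> MS j)"
  define F where "F = (\<lambda>(z' :: nat \<Rightarrow> nat, M). (\<lambda>g. z' g + msum M g))"
  have uB: "u \<in> Betti S" using ch uL unfolding chain_def by auto
  have uS: "u \<in> S" "u > 0" using uB Betti_nonzero[OF NS uB] unfolding Betti_def by auto
  have ch': "chain S ?L'" using chain_sub[OF ch] by blast
  have finIso: "finite (Iso S u)" using finite_subset[OF _ finite_Z[OF NS, of u]] Iso_Z by blast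
  have split: "Iso_set S L = Iso_set S ?L' \<union> Iso S u" by (rule Iso_set_split[OF uL])
  have qiff: "\<And>j. leS S (j * u) s \<longleftrightarrow> j \<le> ?q" using qmax_iff[OF NS uS s] by blast
  have sub1: "F ` D \<subseteq> B S s L"
  proof
    fix z assume "z \<in> F ` D"
    then obtain j z' M where j: "j \<le> ?q" and z': "z' \<in> B S (s - j * u) ?L'" and M: "M \<in> MS j"
      and z: "z = F (z', M)" unfolding D_def by auto
    obtain w rs where w: "w \<in> Is S" and rs: "set rs \<subseteq> Iso_set S ?L'" and z'eq: "z' = vsum w rs"
      and z'Z: "z' \<in> Z S (s - j * u)"
      using z' unfolding B_def by blast
    obtain ms where ms: "mset ms = M" using ex_mset by blast
    have Msub: "set_mset M \<subseteq> Iso S u" "size M = j" using M unfolding MS_def multisets_of_size_def by auto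
    have zeq: "z = vsum w (rs @ ms)" unfolding z F_def vsum_append z'eq ms by simp
    have set: "set (rs @ ms) \<subseteq> Iso_set S L" using rs Msub ms split by auto
    have "j * u \<le> s" using qiff[of j] j unfolding leS_def by simp
    have mI: "phi S (msum M) = j * u" "msum M \<in> vecs S" using msum_Iso[OF Msub(1)] Msub(2) by auto
    have "z \<in> Z S s"
      using z'Z mI \<open>j * u \<le> s\<close> unfolding z F_def Z_def by (auto simp: phi_add intro!: vecs_add)
    moreover have "w \<in> Is S" by (rule w)
    ultimately show "z \<in> B S s L" unfolding B_def using zeq set by blast
  qed
  have sub2: "B S s L \<subseteq> F ` D"
  proof
    fix z assume zB: "z \<in> B S s L"
    then obtain w xs where w: "w \<in> Is S" and xs: "set xs \<subseteq> Iso_set S L" and zeq: "z = vsum w xs"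
      and zZ: "z \<in> Z S s" unfolding B_def by blast
    define rs where "rs = filter (\<lambda>x. x \<notin> Iso S u) xs"
    define ms where "ms = filter (\<lambda>x. x \<in> Iso S u) xs"
    define j where "j = size (mset ms)"
    define z' where "z' = vsum w rs"
    have mm: "mset xs = mset (rs @ ms)" unfolding rs_def ms_def
      using multiset_partition[of "mset xs" "\<lambda>x. x \<notin> Iso S u"] by (simp add: add.commute)
    have zF: "z = F (z', mset ms)"
    proof
      fix g
      have "z g = w g + (\<Sum>y\<leftarrow>xs. y g)" unfolding zeq vsum_apply ..
      also have "\<dots> = w g + (\<Sum>y\<leftarrow>rs @ ms. y g)" using sum_list_mset[OF mm, of "\<lambda>y. y g"] by simp
      also have "\<dots> = F (z', mset ms) g" unfolding F_def z'_def by (simp add: vsum_apply msum_mset)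
      finally show "z g = F (z', mset ms) g" .
    qed
    have rsI: "set rs \<subseteq> Iso_set S ?L'" using xs split unfolding rs_def by auto
    have msI: "set_mset (mset ms) \<subseteq> Iso S u" unfolding ms_def by auto
    have wv: "w \<in> vecs S" using w unfolding Is_def by auto
    have z'v: "z' \<in> vecs S" unfolding z'_def
      by (rule vsum_vecs[OF wv]) (use rsI Iso_set_vecs in blast)
    have mI: "phi S (msum (mset ms)) = j * u" using msum_Iso[OF msI] unfolding j_def by auto
    have "phi S z = phi S z' + j * u" unfolding zF F_def using mI by (simp add: phi_add)
    hence pz: "phi S z' + j * u = s" using zZ unfolding Z_def by simp
    hence "leS S (j * u) s" using phi_in_S[OF NS, of z'] unfolding leS_def by auto
    hence jq: "j \<le> ?q" using qiff by blast
    have "z' \<in> Z S (s - j * u)" using z'v pz unfolding Z_def by auto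
    hence "z' \<in> B S (s - j * u) ?L'" unfolding B_def z'_def using w rsI by blast
    moreover have "mset ms \<in> MS j" unfolding MS_def multisets_of_size_def j_def using msI by auto
    ultimately have "(z', mset ms) \<in> D" unfolding D_def using jq by auto
    thus "z \<in> F ` D" using zF by blast
  qed
  have inj: "inj_on F D"
  proof
    fix p1 p2 assume p1: "p1 \<in> D" and p2: "p2 \<in> D" and eq: "F p1 = F p2"
    obtain z1 M1 z2 M2 where pp: "p1 = (z1, M1)" "p2 = (z2, M2)" by (cases p1, cases p2) auto
    obtain j1 where j1: "z1 \<in> B S (s - j1 * u) ?L'" "M1 \<in> MS j1" using p1 pp unfolding D_def by auto
    obtain j2 where j2: "z2 \<in> B S (s - j2 * u) ?L'" "M2 \<in> MS j2" using p2 pp unfolding D_def by auto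
    obtain w1 r1 where w1: "w1 \<in> Is S" "set r1 \<subseteq> Iso_set S ?L'" "z1 = vsum w1 r1"
      using j1 unfolding B_def by blast
    obtain w2 r2 where w2: "w2 \<in> Is S" "set r2 \<subseteq> Iso_set S ?L'" "z2 = vsum w2 r2"
      using j2 unfolding B_def by blast
    obtain m1 where m1: "mset m1 = M1" using ex_mset by blast
    obtain m2 where m2: "mset m2 = M2" using ex_mset by blast
    have M1s: "set_mset M1 \<subseteq> Iso S u" using j1 unfolding MS_def multisets_of_size_def by auto
    have M2s: "set_mset M2 \<subseteq> Iso S u" using j2 unfolding MS_def multisets_of_size_def by auto
    have "vsum w1 (r1 @ m1) = vsum w2 (r2 @ m2)"
      using eq unfolding pp F_def vsum_append w1(3) w2(3) m1 m2 by simp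
    moreover have s1: "set (r1 @ m1) \<subseteq> Iso_set S L" using w1(2) M1s m1 split by auto
    moreover have s2: "set (r2 @ m2) \<subseteq> Iso_set S L" using w2(2) M2s m2 split by auto
    ultimately have UU: "w1 = w2 \<and> mset (r1 @ m1) = mset (r2 @ m2)"
      by (intro uniqueness[OF NS ch w1(1) w2(1) s1 s2])
    hence U: "w1 = w2" "mset r1 + M1 = mset r2 + M2" using m1 m2 by auto
    have f1: "filter_mset (\<lambda>x. x \<in> Iso S u) (mset r1) = {#}"
      using w1(2) Iso_set_not_u by auto
    have f2: "filter_mset (\<lambda>x. x \<in> Iso S u) (mset r2) = {#}"
      using w2(2) Iso_set_not_u by auto
    have g: "filter_mset (\<lambda>x. x \<in> Iso S u) M = M" if "set_mset M \<subseteq> Iso S u" for M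
    proof (rule multiset_eqI)
      fix x show "count (filter_mset (\<lambda>x. x \<in> Iso S u) M) x = count M x"
        using that by (cases "x \<in># M") (auto simp: not_in_iff)
    qed
    have g1: "filter_mset (\<lambda>x. x \<in> Iso S u) M1 = M1" using g[OF M1s] .
    have g2: "filter_mset (\<lambda>x. x \<in> Iso S u) M2 = M2" using g[OF M2s] .
    have "M1 = M2" using arg_cong[OF U(2), of "filter_mset (\<lambda>x. x \<in> Iso S u)"] f1 f2 g1 g2 by simp
    hence "mset r1 = mset r2" using U(2) by simp
    have "z1 = z2" unfolding w1(3) w2(3) U(1)
    proof (rule ext)
      fix g show "vsum w2 r1 g = vsum w2 r2 g" unfolding vsum_apply
        using sum_list_mset[OF \<open>mset r1 = mset r2\<close>, of "\<lambda>y. y g"] by simp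
    qed
    thus "p1 = p2" using pp \<open>M1 = M2\<close> by simp
  qed
  have finB: "finite (B S t L0)" for t L0
  proof (rule finite_subset[OF _ finite_Z[OF NS, of t]])
    show "B S t L0 \<subseteq> Z S t" unfolding B_def by (rule subsetI) (drule CollectD, erule conjunct1)
  qed
  have finMS: "finite (MS j)" for j unfolding MS_def using finite_multisets_of_size[OF finIso] .
  have disj: "\<forall>i\<in>{0..?q}. \<forall>j\<in>{0..?q}. i \<noteq> j \<longrightarrow>
      (B S (s - i * u) ?L' \<times> MS i) \<inter> (B S (s - j * u) ?L' \<times> MS j) = {}"
    unfolding MS_def multisets_of_size_def by auto
  have cardD: "card D = (\<Sum>j=0..?q. card (B S (s - j * u) ?L' \<times> MS j))"
    unfolding D_def by (rule card_UN_disjoint) (use finB finMS disj in auto)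
  also have "\<dots> = (\<Sum>j=0..?q. card (B S (s - j * u) ?L') * card (MS j))"
    by (simp add: card_cartesian_product)
  finally have cardD: "card D = (\<Sum>j=0..?q. card (B S (s - j * u) ?L') * card (MS j))" .
  have "B S s L = F ` D" using sub1 sub2 by blast
  hence "card (B S s L) = card D" using card_image[OF inj] by simp
  also have "\<dots> = (\<Sum>j=0..?q. card (B S (s - j * u) ?L') * ((iso_count S u + j - 1) choose j))"
    unfolding cardD MS_def iso_count_def using card_multisets_of_size[OF finIso] by simp
  finally show ?thesis .
qed

theorem lemma5p14:
  fixes S :: "nat set" and u :: nat and \<Lambda> :: "nat set"
  assumes "numerical_semigroup S"
    and "u \<in> U_Betti S"
    and "\<Lambda> = {b \<in> Betti S. leS S b u}"
  shows "(\<forall>s\<in>S. \<forall>z\<in>B S s \<Lambda>.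
            (\<exists>w\<in>Is S. \<exists>xs. set xs \<subseteq> Iso_set S \<Lambda> \<and> z = vsum w xs) \<and>
            (\<forall>w w' xs xs'. w \<in> Is S \<longrightarrow> w' \<in> Is S \<longrightarrow>
                set xs \<subseteq> Iso_set S \<Lambda> \<longrightarrow> set xs' \<subseteq> Iso_set S \<Lambda> \<longrightarrow>
                z = vsum w xs \<longrightarrow> z = vsum w' xs' \<longrightarrow> w = w' \<and> mset xs = mset xs'))
       \<and> (\<forall>s\<in>S. card (B S s \<Lambda>) =
            (\<Sum>j=0..qmax S u s. card (B S (s - j * u) (\<Lambda> - {u})) *
                ((iso_count S u + j - 1) choose j)))"
proof -
  have NS: "numerical_semigroup S" by (rule assms(1))
  have uB: "u \<in> Betti S" using assms(2) unfolding U_Betti_def by blast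
  have ch: "chain S \<Lambda>"
    unfolding chain_def
  proof
    show "\<Lambda> \<subseteq> Betti S" using assms(3) by blast
    show "\<forall>a\<in>\<Lambda>. \<forall>b\<in>\<Lambda>. leS S a b \<or> leS S b a"
    proof (intro ballI)
      fix a b assume "a \<in> \<Lambda>" "b \<in> \<Lambda>"
      hence "a \<in> Betti S" "b \<in> Betti S" "leS S a u" "leS S b u" using assms(3) by auto
      thus "leS S a b \<or> leS S b a" using assms(2) unfolding U_Betti_def by blast
    qed
  qed
  have uL: "u \<in> \<Lambda>" using assms(3) uB ns_zero[OF NS] unfolding leS_def by auto
  have P1: "\<forall>s\<in>S. \<forall>z\<in>B S s \<Lambda>.
            (\<exists>w\<in>Is S. \<exists>xs. set xs \<subseteq> Iso_set S \<Lambda> \<and> z = vsum w xs) \<and>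
            (\<forall>w w' xs xs'. w \<in> Is S \<longrightarrow> w' \<in> Is S \<longrightarrow>
                set xs \<subseteq> Iso_set S \<Lambda> \<longrightarrow> set xs' \<subseteq> Iso_set S \<Lambda> \<longrightarrow>
                z = vsum w xs \<longrightarrow> z = vsum w' xs' \<longrightarrow> w = w' \<and> mset xs = mset xs')"
  proof (intro ballI)
    fix s z assume z: "z \<in> B S s \<Lambda>"
    have e: "\<exists>w\<in>Is S. \<exists>xs. set xs \<subseteq> Iso_set S \<Lambda> \<and> z = vsum w xs" using z unfolding B_def by blast
    have un: "\<forall>w w' xs xs'. w \<in> Is S \<longrightarrow> w' \<in> Is S \<longrightarrow>
                set xs \<subseteq> Iso_set S \<Lambda> \<longrightarrow> set xs' \<subseteq> Iso_set S \<Lambda> \<longrightarrow>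
                z = vsum w xs \<longrightarrow> z = vsum w' xs' \<longrightarrow> w = w' \<and> mset xs = mset xs'"
    proof (intro allI impI)
      fix w w' xs xs'
      assume a: "w \<in> Is S" "w' \<in> Is S" "set xs \<subseteq> Iso_set S \<Lambda>" "set xs' \<subseteq> Iso_set S \<Lambda>"
        "z = vsum w xs" "z = vsum w' xs'"
      have "vsum w xs = vsum w' xs'" using a(5,6) by simp
      thus "w = w' \<and> mset xs = mset xs'" by (rule uniqueness[OF NS ch a(1-4)])
    qed
    show "(\<exists>w\<in>Is S. \<exists>xs. set xs \<subseteq> Iso_set S \<Lambda> \<and> z = vsum w xs) \<and>
            (\<forall>w w' xs xs'. w \<in> Is S \<longrightarrow> w' \<in> Is S \<longrightarrow>
                set xs \<subseteq> Iso_set S \<Lambda> \<longrightarrow> set xs' \<subseteq> Iso_set S \<Lambda> \<longrightarrow>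
                z = vsum w xs \<longrightarrow> z = vsum w' xs' \<longrightarrow> w = w' \<and> mset xs = mset xs')"
      using e un by (rule conjI)
  qed
  have P2: "\<forall>s\<in>S. card (B S s \<Lambda>) =
            (\<Sum>j=0..qmax S u s. card (B S (s - j * u) (\<Lambda> - {u})) *
                ((iso_count S u + j - 1) choose j))"
    using count_formula[OF NS ch uL] by blast
  show ?thesis using P1 P2 by blast
qed

end
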